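(* Let $T=\mathrm{diag}(t_1,t_2,t_3)$ with $t_1t_2t_3\neq 0$ be such that the T-state $\rho_T$ is a valid density operator, and suppose $2\pi N_T|\det T|=1$. Define the probability density $P(\boldsymbol n)=N_T(\boldsymbol n^\intercal T^{-2}\boldsymbol n)^{-2}$ on $S^2$ and, for each unit vector $\boldsymbol e\in S^2$, the region $\mathcal R[\boldsymbol e]=\{\boldsymbol n\in S^2:\ \boldsymbol n\cdot T^{-1}\boldsymbol e\geq 0\}$ (i.e. the deterministic response $p(1|\boldsymbol e,\boldsymbol n)=1$ if $\boldsymbol n\in\mathcal R[\boldsymbol e]$ and $0$ otherwise). Then for every unit vector $\boldsymbol e$, \[ \int_{\mathcal R[\boldsymbol e]}P(\boldsymbol n)\,\mathrm{d}^2\boldsymbol n=\tfrac12,\qquad \int_{\mathcal R[\boldsymbol e]}P(\boldsymbol n)\,\boldsymbol n\,\mathrm{d}^2\boldsymbol n=\tfrac12\,T\boldsymbol e . \] Consequently, $\rho_T$ admits a local hidden state model for Bob with respect to all projective measurements by Alice: for every projector $E=\tfrac12(\mathbb 1+\boldsymbol e\cdot\boldsymbol\sigma)$, $|\boldsymbol e|=1$, \[ \mathrm{tr}_A[\rho_T\,(E\otimes\mathbb 1)]=\int_{S^2}P(\boldsymbol n)\,p(1|\boldsymbol e,\boldsymbol n)\,\tfrac12(\mathbb 1+\boldsymbol n\cdot\boldsymbol\sigma)\,\mathrm{d}^2\boldsymbol n,\qquad \mathrm{tr}[\rho_T(E\otimes\mathbb 1)]=\int_{S^2}P(\boldsymbol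 n)\,p(1|\boldsymbol e,\boldsymbol n)\,\mathrm{d}^2\boldsymbol n, \] so $\rho_T$ is not EPR-steerable by Alice using projective measurements.
   Context: $\boldsymbol\sigma=(\sigma_1,\sigma_2,\sigma_3)$ are the Pauli matrices. A T-state is the two-qubit state $\rho_T=\frac14\big(\mathbb 1\otimes\mathbb 1+\sum_{j=1}^3 t_j\,\sigma_j\otimes\sigma_j\big)$. $S^2$ is the unit sphere with surface measure $\mathrm{d}^2\boldsymbol n$, and $N_T$ is defined by $N_T^{-1}=\int_{S^2}(\boldsymbol n^\intercal T^{-2}\boldsymbol n)^{-2}\,\mathrm{d}^2\boldsymbol n$. For a projector $E$ on Alice's qubit, $\mathrm{tr}_A$ denotes the partial trace over Alice's qubit. A state is non-EPR-steerable by Alice (for projective measurements) if there exist a probability distribution over hidden variables $\lambda$, response probabilities $p(1|E,\lambda)\in[0,1]$ for each projector $E$ of Alice, and qubit states $\rho_B(\lambda)$ such that $\mathrm{tr}_A[\rho(E\otimes\mathbb 1)]=\sum_\lambda P(\lambda)p(1|E,\lambda)\rho_B(\lambda)$ for every projector $E$ (which also implies $\mathrm{tr}[\rho(E\otimes \mathbb 1)]=\sum_\lambda P(\lambda)p(1|E,\lambda)$); here the hidden variable is the unit vector $\boldsymbol n$ and $\rho_B(\boldsymbol n)=\tfrac12(\mathbb 1+\boldsymbol n\cdot\boldsymbol\sigma)$. *)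

theory Defs
  imports "HOL-Analysis.Analysis"
begin

text \<open>The surface (area) measure on S^2 is realised through the cone construction:
  for g on S^2, the integral of g over S^2 w.r.t. surface measure equals
  3 times the Lebesgue integral over the unit ball of g(x/|x|).\<close>

definition sphere_integral :: "(real^3 \<Rightarrow> 'b::{banach,second_countable_topology}) \<Rightarrow> 'b" where
  "sphere_integral g = 3 *\<^sub>R (LINT x : ball 0 1 | lborel. g (x /\<^sub>R norm x))"

definition unit_sphere3 :: "(real^3) set" where
  "unit_sphere3 = sphere 0 1"

type_synonym cmat2 = "complex^2^2"
type_synonym cmat4 = "complex^(2\<times>2)^(2\<times>2)"

definition pauli :: "3 \<Rightarrow> cmat2" where
  "pauli k = (if k = 1 then vector [vector [0, 1], vector [1, 0]]
              else if k = 2 then vector [vector [0, -\<i>], vector [\<i>, 0]]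
              else vector [vector [1, 0], vector [0, -1]])"

definition dot_sigma :: "real^3 \<Rightarrow> cmat2" where
  "dot_sigma n = (\<Sum>k\<in>UNIV. n $ k *\<^sub>R pauli k)"

definition kron :: "complex^('a::finite)^'a \<Rightarrow> complex^('b::finite)^'b \<Rightarrow> complex^('a\<times>'b)^('a\<times>'b)" where
  "kron A B = (\<chi> p q. A $ fst p $ fst q * B $ snd p $ snd q)"

definition ptrace_A :: "complex^('a::finite\<times>'b::finite)^('a\<times>'b) \<Rightarrow> complex^'b^'b" where
  "ptrace_A M = (\<chi> j l. \<Sum>i\<in>UNIV. M $ (i, j) $ (i, l))"

definition mtrace :: "complex^'n^'n \<Rightarrow> complex" where
  "mtrace M = (\<Sum>i\<in>UNIV. M $ i $ i)"

text \<open>Density operator: positive semidefinite (which implies Hermitian over C) with unit trace.\<close>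
definition density_operator :: "complex^'n^'n \<Rightarrow> bool" where
  "density_operator M \<longleftrightarrow>
     (\<forall>v. let q = (\<Sum>i\<in>UNIV. cnj (v $ i) * (M *v v) $ i) in Im q = 0 \<and> Re q \<ge> 0)
     \<and> mtrace M = 1"

definition diag3 :: "real^3 \<Rightarrow> real^3^3" where
  "diag3 t = (\<chi> i j. if i = j then t $ i else 0)"

definition T_state :: "real^3 \<Rightarrow> cmat4" where
  "T_state t = (1/4 :: real) *\<^sub>R (kron (mat 1) (mat 1)
                 + (\<Sum>j\<in>UNIV. t $ j *\<^sub>R kron (pauli j) (pauli j)))"

definition N_T :: "real^3^3 \<Rightarrow> real" where
  "N_T T = inverse (sphere_integral
      (\<lambda>n. inverse ((n \<bullet> ((matrix_inv T ** matrix_inv T) *v n)) ^ 2)))"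

definition LHS_density :: "real^3^3 \<Rightarrow> real^3 \<Rightarrow> real" where
  "LHS_density T n = N_T T * inverse ((n \<bullet> ((matrix_inv T ** matrix_inv T) *v n)) ^ 2)"

definition region :: "real^3^3 \<Rightarrow> real^3 \<Rightarrow> (real^3) set" where
  "region T e = {n \<in> unit_sphere3. n \<bullet> (matrix_inv T *v e) \<ge> 0}"

definition response :: "real^3^3 \<Rightarrow> real^3 \<Rightarrow> real^3 \<Rightarrow> real" where
  "response T e n = (if n \<in> region T e then 1 else 0)"

definition projector :: "real^3 \<Rightarrow> cmat2" where
  "projector e = (1/2 :: real) *\<^sub>R (mat 1 + dot_sigma e)"

end

theory Submission
  imports Defs
begin



lemma diag3_mult: "diag3 a ** diag3 b = diag3 (\<chi> i. a$i * b$i)"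
  by (simp add: diag3_def matrix_matrix_mult_def vec_eq_iff forall_3 sum_3)

lemma matrix_inv_diag3:
  assumes "\<And>i. t$i \<noteq> 0"
  shows "matrix_inv (diag3 t) = diag3 (\<chi> i. inverse (t$i))"
proof -
  let ?B = "diag3 (\<chi> i. inverse (t$i))"
  have 1: "diag3 t ** ?B = mat 1" "?B ** diag3 t = mat 1"
    using assms by (simp_all add: diag3_mult, auto simp: mat_def diag3_def vec_eq_iff forall_3)
  have "diag3 t ** matrix_inv (diag3 t) = mat 1 \<and> matrix_inv (diag3 t) ** diag3 t = mat 1"
    unfolding matrix_inv_def by (rule someI[of _ ?B]) (use 1 in auto)
  then have "matrix_inv (diag3 t) = matrix_inv (diag3 t) ** (diag3 t ** ?B)"
    using 1 by simp
  also have "\<dots> = ?B" using \<open>_ \<and> _\<close> by (simp add: matrix_mul_assoc)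
  finally show ?thesis .
qed

lemma diag3_mulv: "diag3 a *v x = (\<chi> i. a$i * x$i)"
  by (simp add: diag3_def matrix_vector_mult_def vec_eq_iff forall_3 sum_3)

lemma det_diag3: "det (diag3 t) = t$1 * t$2 * t$3"
  by (simp add: det_3 diag3_def)

lemma det3_update:
  fixes a b p q :: "real^3"
  shows "det (c *\<^sub>R mat 1 + (\<chi> i j. a$i * b$j) + (\<chi> i j. p$i * q$j)) =
     c^3 + c^2 * (a \<bullet> b + p \<bullet> q) + c * ((a \<bullet> b) * (p \<bullet> q) - (a \<bullet> q) * (p \<bullet> b))"
  by (simp add: det_3 inner_vec_def sum_3 mat_def) algebra


lemma absint_of_lborel:
  fixes f :: "'a::euclidean_space \<Rightarrow> 'b::euclidean_space"
  assumes "set_integrable lborel S f"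
  shows "f absolutely_integrable_on S"
  using assms unfolding set_integrable_def
  by (subst integrable_completion) (auto dest: borel_measurable_integrable)

lemma bdd_setint:
  fixes h :: "real^3 \<Rightarrow> 'b::{banach, second_countable_topology}"
  assumes "h \<in> borel_measurable lborel" "\<And>x. norm (h x) \<le> C" "S \<in> sets lborel" "S \<subseteq> ball 0 1"
  shows "set_integrable lborel S h"
  unfolding set_integrable_def
proof (rule integrableI_bounded_set[where A=S and B=C])
  show "emeasure lborel S < \<infinity>"
    using assms(4) bounded_ball bounded_subset emeasure_bounded_finite by blast
qed (use assms in \<open>auto simp: indicator_def\<close>)

lemma meas_phi: "(\<lambda>z::real^3. indicator {z. 0 \<le> z \<bullet> e} z *\<^sub>R (z /\<^sub>R norm z)) \<in> borel_measurable lborel"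
  by measurable

lemma matrix_upd:
  fixes a b p q :: "real^3"
  shows "matrix (\<lambda>h. c *\<^sub>R h + (b \<bullet> h) *\<^sub>R a + (q \<bullet> h) *\<^sub>R p) =
     c *\<^sub>R mat 1 + (\<chi> i j. a$i * b$j) + (\<chi> i j. p$i * q$j)"
  by (simp add: matrix_def vec_eq_iff mat_def inner_axis mult.commute) (simp add: axis_def)

lemma dnorm: "x \<noteq> 0 \<Longrightarrow> (norm has_derivative (\<lambda>h. (x \<bullet> h) / norm x)) (at x)"
  using has_derivative_norm[of x] by (simp add: sgn_div_norm inner_commute divide_inverse_commute)

lemma Lam_deriv:
  fixes x e :: "real^3"
  assumes "x \<noteq> 0"
  shows "((\<lambda>y. (2 * (y \<bullet> e) / norm y) *\<^sub>R y - norm y *\<^sub>R e) has_derivative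
     (\<lambda>h. (2 * (x \<bullet> e) / norm x) *\<^sub>R h + (((2 / norm x) *\<^sub>R e - (2 * (x \<bullet> e) / norm x ^ 3) *\<^sub>R x) \<bullet> h) *\<^sub>R x
        + ((x /\<^sub>R norm x) \<bullet> h) *\<^sub>R (- e))) (at x)"
  apply (rule has_derivative_eq_rhs)
   apply (rule derivative_eq_intros dnorm assms | simp add: assms)+
  apply (rule ext)
  using assms apply (simp add: inner_diff_left inner_diff_right inner_commute field_simps power3_eq_cube)
  done


lemma norm_Lam:
  fixes x e :: "real^3" assumes e: "norm e = 1"
  shows "norm ((2 * (x \<bullet> e) / norm x) *\<^sub>R x - norm x *\<^sub>R e) = norm x"
proof (cases "x = 0")
  case False
  have ee: "e \<bullet> e = 1" using e by (simp add: dot_square_norm)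
  have xx: "x \<bullet> x = norm x ^ 2" by (simp add: dot_square_norm)
  have "(norm ((2 * (x \<bullet> e) / norm x) *\<^sub>R x - norm x *\<^sub>R e))^2 = (norm x)^2"
    unfolding power2_norm_eq_inner using False
    by (simp add: inner_diff_left inner_diff_right inner_commute ee xx field_simps power2_eq_square)
  then show ?thesis by (simp add: power2_eq_iff_nonneg)
qed simp

lemma Lam_part:
  fixes e :: "real^3" assumes e: "norm e = 1"
  shows "integral (ball 0 1 \<inter> {x. 0 < x \<bullet> e}) (\<lambda>x. (x \<bullet> e) / norm x) = pi / 3"
proof -
  define L where "L = (\<lambda>y::real^3. (2 * (y \<bullet> e) / norm y) *\<^sub>R y - norm y *\<^sub>R e)"
  define L' where "L' = (\<lambda>x h. (2 * (x \<bullet> e) / norm x) *\<^sub>R h + (((2 / norm x) *\<^sub>R e - (2 * (x \<bullet> e) / norm x ^ 3) *\<^sub>R x) \<bullet> h) *\<^sub>R x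
        + ((x /\<^sub>R norm x) \<bullet> h) *\<^sub>R (- e))"
  define S where "S = ball (0::real^3) 1 \<inter> {x. 0 < x \<bullet> e}"
  have ee: "e \<bullet> e = 1" using e by (simp add: dot_square_norm)
  have S0: "x \<noteq> 0" if "x \<in> S" for x using that by (auto simp: S_def)
  have der: "(L has_derivative L' x) (at x within S)" if "x \<in> S" for x
    unfolding L_def L'_def using Lam_deriv[OF S0[OF that]] by (rule has_derivative_at_withinI)
  have det: "\<bar>det (matrix (L' x))\<bar> = 4 * (x \<bullet> e) / norm x" if "x \<in> S" for x
  proof -
    have x0: "x \<noteq> 0" and xe: "0 < x \<bullet> e" using that S0 by (auto simp: S_def)
    have xx: "x \<bullet> x = norm x ^ 2" by (simp add: dot_square_norm)
    have "det (matrix (L' x)) = 4 * (x \<bullet> e) / norm x"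
      unfolding L'_def matrix_upd det3_update using x0
      by (simp add: inner_diff_left inner_diff_right inner_commute ee xx field_simps power3_eq_cube power2_eq_square)
    then show ?thesis using xe by simp
  qed
  have nL: "norm (L x) = norm x" for x unfolding L_def using norm_Lam[OF e] .
  have inj: "inj_on L S"
  proof (rule inj_onI)
    fix x y assume xS: "x \<in> S" and yS: "y \<in> S" and eq: "L x = L y"
    have r: "norm x = norm y" using nL[of x] nL[of y] eq by simp
    have x0: "norm x > 0" using S0[OF xS] by simp
    have kx: "x \<bullet> e > 0" "y \<bullet> e > 0" using xS yS by (auto simp: S_def)
    have eq2: "(2 * (x \<bullet> e) / norm x) *\<^sub>R x = (2 * (y \<bullet> e) / norm x) *\<^sub>R y"
      using eq r unfolding L_def by (simp add: algebra_simps)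
    then have "(2 * (x \<bullet> e) / norm x) * (x \<bullet> e) = (2 * (y \<bullet> e) / norm x) * (y \<bullet> e)"
      by (metis inner_scaleR_left)
    then have "(x \<bullet> e)^2 = (y \<bullet> e)^2" using x0 by (simp add: field_simps power2_eq_square)
    then have "x \<bullet> e = y \<bullet> e" using kx by (simp add: power2_eq_iff_nonneg)
    then show "x = y" using eq2 kx x0 by simp
  qed
  have Lsub: "L ` S \<subseteq> ball 0 1" using nL by (auto simp: S_def)
  have cover: "ball 0 1 - L ` S \<subseteq> span {e}"
  proof
    fix y assume y: "y \<in> ball 0 1 - L ` S"
    show "y \<in> span {e}"
    proof (rule ccontr)
      assume ny: "y \<notin> span {e}"
      define m where "m = y /\<^sub>R norm y + e"
      have y0: "y \<noteq> 0" using ny span_zero by auto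
      have ry: "norm y > 0" using y0 by simp
      have yy: "y \<bullet> y = norm y ^ 2" by (simp add: dot_square_norm)
      have me: "m \<bullet> e > 0"
      proof -
        have "(norm (y + norm y *\<^sub>R e))^2 = 2 * norm y * (norm y + y \<bullet> e)"
          unfolding power2_norm_eq_inner by (simp add: inner_add_left inner_add_right inner_commute ee yy power2_eq_square algebra_simps)
        moreover have "y + norm y *\<^sub>R e \<noteq> 0"
        proof
          assume "y + norm y *\<^sub>R e = 0"
          then have "y = (- norm y) *\<^sub>R e" by (simp add: algebra_simps eq_neg_iff_add_eq_0)
          then show False using ny by (metis span_base span_mul singletonI)
        qed
        ultimately have "0 < 2 * norm y * (norm y + y \<bullet> e)"
          by (metis zero_less_norm_iff zero_less_power)
        then have "norm y + y \<bullet> e > 0" using ry by (simp add: zero_less_mult_iff)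
        then show ?thesis unfolding m_def using ry ee by (simp add: inner_add_left field_simps)
      qed
      have mm: "m \<bullet> m = 2 * (m \<bullet> e)"
        unfolding m_def using ry by (simp add: inner_add_left inner_add_right inner_commute ee yy field_simps power2_eq_square)
      have m0: "norm m > 0" using me by (metis inner_zero_left zero_less_norm_iff order_less_irrefl)
      define x where "x = (norm y / norm m) *\<^sub>R m"
      have nx: "norm x = norm y" unfolding x_def using m0 by simp
      have xe: "x \<bullet> e > 0" unfolding x_def using m0 ry me by simp
      have xS: "x \<in> S" using y nx xe by (simp add: S_def)
      have "L x = y"
      proof -
        have mm2: "norm m ^ 2 = 2 * (m \<bullet> e)" using mm by (simp add: dot_square_norm)
        have "L x = (2 * (x \<bullet> e) / norm x) *\<^sub>R x - norm y *\<^sub>R e" unfolding L_def nx ..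
        also have "(2 * (x \<bullet> e) / norm x) *\<^sub>R x = (norm y * (2 * (m \<bullet> e) / norm m ^ 2)) *\<^sub>R m"
          unfolding nx x_def using ry m0 by (simp add: field_simps power2_eq_square)
        also have "\<dots> = norm y *\<^sub>R m" using mm2 me by simp
        finally show ?thesis unfolding m_def using ry by (simp add: algebra_simps)
      qed
      then show False using y xS by auto
    qed
  qed
  have negl: "negligible (ball 0 1 - L ` S)"
  proof (rule negligible_subset[OF negligible_lowdim cover])
    have "dim (span {e}) \<le> card {e}" by (rule dim_le_card) auto
    then show "dim (span {e}) < DIM(real^3)" by simp
  qed
  have LSm: "L ` S \<in> lmeasurable"
  proof -
    have "L ` S = ball 0 1 - (ball 0 1 - L ` S)" using Lsub by blast
    then show ?thesis using negl by (metis fmeasurable.Diff lmeasurable_ball negligible_imp_measurable)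
  qed
  have Sleb: "S \<in> sets lebesgue"
    unfolding S_def by (intro fmeasurableD lmeasurable_open) (auto intro!: open_Int open_Collect_less continuous_intros bounded_Int)
  have intB: "integral (ball 0 1) (\<lambda>_::real^3. e) = (4/3 * pi) *\<^sub>R e"
  proof -
    have "integral (ball 0 1) (\<lambda>_::real^3. (1::real) *\<^sub>R e) = integral (ball 0 1) (\<lambda>_::real^3. 1::real) *\<^sub>R e"
      by (intro integral_unique has_integral_scaleR_left integrable_integral integrable_on_const lmeasurable_ball)
    also have "integral (ball 0 1) (\<lambda>_::real^3. 1::real) = 4/3 * pi"
      using lmeasure_integral[of "ball (0::real^3) 1"] sphere_volume[of 1 "0::real^3"] by simp
    finally show ?thesis by simp
  qed
  have rhs: "(\<lambda>_. e) absolutely_integrable_on (L ` S) \<and> integral (L ` S) (\<lambda>_. e) = (4/3 * pi) *\<^sub>R e"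
    using LSm intB integral_subset_negligible[OF Lsub negl, of "\<lambda>_. e"] by simp
  have cov: "(\<lambda>x. \<bar>det (matrix (L' x))\<bar> *\<^sub>R e) absolutely_integrable_on S \<and>
      integral S (\<lambda>x. \<bar>det (matrix (L' x))\<bar> *\<^sub>R e) = (4/3 * pi) *\<^sub>R e"
    using has_absolute_integral_change_of_variables[OF Sleb der inj, of "\<lambda>_. e"] rhs by blast
  have cov2: "(\<lambda>x. (4 * (x \<bullet> e) / norm x) *\<^sub>R e) integrable_on S \<and>
      integral S (\<lambda>x. (4 * (x \<bullet> e) / norm x) *\<^sub>R e) = (4/3 * pi) *\<^sub>R e"
    using cov det by (metis (no_types, lifting) integral_cong integrable_eq absolutely_integrable_on_def set_lebesgue_integral_eq_integral(1))
  have "integral S (\<lambda>x. (4 * (x \<bullet> e) / norm x) *\<^sub>R e) \<bullet> e = integral S (\<lambda>x. 4 * ((x \<bullet> e) / norm x))"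
    using integral_component_eq[OF cov2[THEN conjunct1], of e] ee by simp
  then have "4 * integral S (\<lambda>x. (x \<bullet> e) / norm x) = 4/3 * pi"
    using cov2 ee integral_cmul[where c=4 and S=S and f="\<lambda>x. (x \<bullet> e) / norm x"] by simp
  then show ?thesis unfolding S_def by simp
qed


definition phi :: "real^3 \<Rightarrow> real^3 \<Rightarrow> real^3" where
  "phi e z = indicator {z. 0 \<le> z \<bullet> e} z *\<^sub>R (z /\<^sub>R norm z)"

lemma phi_bound: "norm (phi e z) \<le> 1"
  by (cases "z = 0") (auto simp: phi_def indicator_def)

lemma phi_setint: "set_integrable lborel (ball 0 1) (phi e)"
  using bdd_setint[OF meas_phi[of e] _ _ order_refl, of 1] phi_bound unfolding phi_def by auto

lemma phi_absint: "phi e absolutely_integrable_on ball 0 1"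
  by (rule absint_of_lborel[OF phi_setint])

lemma V_perp:
  fixes e v :: "real^3" assumes ve: "v \<bullet> e = 0" and v0: "v \<noteq> 0"
  shows "integral (ball 0 1) (phi e) \<bullet> v = 0"
proof -
  define H where "H = (\<lambda>z::real^3. z - (2 * (z \<bullet> v) / (v \<bullet> v)) *\<^sub>R v)"
  have vv: "v \<bullet> v \<noteq> 0" using v0 by simp
  have lin: "linear H" unfolding H_def
    by (rule linearI) (auto simp: inner_add_left algebra_simps add_divide_distrib)
  have orth: "orthogonal_transformation H"
    unfolding orthogonal_transformation_def using lin vv
    by (auto simp: H_def inner_diff_left inner_diff_right inner_commute field_simps)
  have H0: "H 0 = 0" by (simp add: H_def)
  have HB: "H ` ball 0 1 = ball 0 1" using image_orthogonal_transformation_ball[OF orth] H0 by simp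
  have nH: "norm (H z) = norm z" for z using orth by (simp add: orthogonal_transformation_norm)
  have He: "H z \<bullet> e = z \<bullet> e" for z using ve by (simp add: H_def inner_diff_left)
  have phiH: "phi e (H z) = H (phi e z)" for z
    unfolding phi_def using nH[of z] He[of z] linear_cmul[OF lin]
    by (simp add: divide_inverse_commute indicator_def He)
  have "integral (H ` ball 0 1) (phi e) = \<bar>det (matrix H)\<bar> *\<^sub>R integral (ball 0 1) (phi e \<circ> H)"
    by (rule integral_change_of_variables_linear[OF lin]) (use HB phi_absint in auto)
  also have "phi e \<circ> H = H \<circ> phi e" using phiH by auto
  also have "integral (ball 0 1) (H \<circ> phi e) = H (integral (ball 0 1) (phi e))"
    by (rule integral_linear[OF _ lin[unfolded linear_conv_bounded_linear]])
       (rule set_lebesgue_integral_eq_integral(1)[OF phi_absint])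
  finally have eq0: "integral (H ` ball 0 1) (phi e) = \<bar>det (matrix H)\<bar> *\<^sub>R H (integral (ball 0 1) (phi e))" .
  define V where "V = integral (ball 0 1) (phi e)"
  have eq: "V = V - (2 * (V \<bullet> v) / (v \<bullet> v)) *\<^sub>R v"
    using eq0 unfolding HB orthogonal_transformation_det[OF orth] scaleR_one V_def[symmetric]
    unfolding H_def .
  have "(2 * (V \<bullet> v) / (v \<bullet> v)) *\<^sub>R v = 0"
    using eq by (metis add_diff_cancel_left' diff_add_cancel diff_self)
  then show ?thesis using v0 vv unfolding V_def by simp
qed

lemma V_calc:
  fixes e :: "real^3" assumes e: "norm e = 1"
  shows "integral (ball 0 1) (phi e) = (pi / 3) *\<^sub>R e"
proof -
  define V where "V = integral (ball 0 1) (phi e)"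
  have ee: "e \<bullet> e = 1" using e by (simp add: dot_square_norm)
  have int: "phi e integrable_on ball 0 1"
    by (rule set_lebesgue_integral_eq_integral(1)[OF phi_absint])
  have "V \<bullet> e = integral (ball 0 1) (\<lambda>z. phi e z \<bullet> e)"
    unfolding V_def by (rule integral_component_eq[OF int, symmetric])
  also have "(\<lambda>z. phi e z \<bullet> e) = (\<lambda>z. if z \<in> {x. 0 < x \<bullet> e} then (z \<bullet> e) / norm z else 0)"
    by (auto simp: phi_def indicator_def divide_inverse_commute)
  also have "integral (ball 0 1) \<dots> = integral ({x. 0 < x \<bullet> e} \<inter> ball 0 1) (\<lambda>z. (z \<bullet> e) / norm z)"
    by (rule integral_restrict_Int)
  also have "\<dots> = pi / 3" using Lam_part[OF e] by (simp add: Int_commute)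
  finally have Ve: "V \<bullet> e = pi / 3" .
  define w where "w = V - (V \<bullet> e) *\<^sub>R e"
  have we: "w \<bullet> e = 0" unfolding w_def by (simp add: inner_diff_left ee)
  have "w = 0"
  proof (rule ccontr)
    assume "w \<noteq> 0"
    then have "V \<bullet> w = 0" using V_perp[OF we] unfolding V_def by simp
    then have "w \<bullet> w = 0" unfolding w_def using we
      by (simp add: inner_diff_left inner_diff_right inner_commute ee)
    then show False using \<open>w \<noteq> 0\<close> by simp
  qed
  then show ?thesis using Ve unfolding w_def V_def by simp
qed


definition Qf :: "real^3 \<Rightarrow> real^3 \<Rightarrow> real" where
  "Qf t n = (n$1)^2 / (t$1)^2 + (n$2)^2 / (t$2)^2 + (n$3)^2 / (t$3)^2"

lemma Q_eq:
  assumes "\<And>i. t$i \<noteq> 0"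
  shows "n \<bullet> ((matrix_inv (diag3 t) ** matrix_inv (diag3 t)) *v n) = Qf t n"
  using assms by (simp add: matrix_inv_diag3 diag3_mult diag3_mulv inner_vec_def sum_3 Qf_def
      field_simps power2_eq_square)

lemma Qf_scale: "Qf t (c *\<^sub>R n) = c^2 * Qf t n"
  by (simp add: Qf_def field_simps power2_eq_square)

lemma Qf_neg: "Qf t (- n) = Qf t n"
  by (simp add: Qf_def)

lemma Qf_diag: "(\<And>i. t$i \<noteq> 0) \<Longrightarrow> Qf t (diag3 t *v z) = z \<bullet> z"
  by (simp add: Qf_def diag3_mulv inner_vec_def sum_3 field_simps power2_eq_square)

lemma Qf_lower:
  assumes t: "\<And>i. t$i \<noteq> 0" and n: "norm n = 1"
  shows "Qf t n \<ge> 1 / ((t$1)^2 + (t$2)^2 + (t$3)^2)"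
proof -
  define S where "S = (t$1)^2 + (t$2)^2 + (t$3)^2"
  have tp: "(t$i)^2 > 0" for i using t[of i] by simp
  have S: "S > 0" unfolding S_def by (metis add_pos_pos tp)
  have le: "(t$i)^2 \<le> S" for i unfolding S_def using tp exhaust_3[of i] by (auto simp: add_nonneg_nonneg)
  have one: "(n$1)^2 + (n$2)^2 + (n$3)^2 = 1"
    using n by (simp add: norm_vec_def L2_set_def sum_3)
  have "(n$i)^2 / S \<le> (n$i)^2 / (t$i)^2" for i
    using le[of i] tp[of i] S by (intro divide_left_mono) auto
  then have "((n$1)^2 + (n$2)^2 + (n$3)^2) / S \<le> Qf t n"
    unfolding Qf_def add_divide_distrib by (meson add_mono)
  then show ?thesis using one unfolding S_def by simp
qed

lemma Qinv_bound:
  assumes t: "\<And>i. t$i \<noteq> 0"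
  shows "\<bar>inverse ((Qf t (x /\<^sub>R norm x))^2)\<bar> \<le> ((t$1)^2 + (t$2)^2 + (t$3)^2)^2"
proof (cases "x = 0")
  case True then show ?thesis by (simp add: Qf_def)
next
  case False
  define S where "S = (t$1)^2 + (t$2)^2 + (t$3)^2"
  have tp: "(t$i)^2 > 0" for i using t[of i] by simp
  have S: "S > 0" unfolding S_def by (metis add_pos_pos tp)
  have q: "Qf t (x /\<^sub>R norm x) \<ge> 1 / S" unfolding S_def using Qf_lower[OF t] False by simp
  then have qp: "Qf t (x /\<^sub>R norm x) > 0" using S by (meson less_le_trans zero_less_divide_1_iff)
  have "(1/S)^2 \<le> (Qf t (x /\<^sub>R norm x))^2" using q S by (intro power_mono) auto
  then have "inverse ((Qf t (x /\<^sub>R norm x))^2) \<le> inverse ((1/S)^2)"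
    using S by (intro le_imp_inverse_le) auto
  then show ?thesis using qp unfolding S_def[symmetric] by (simp add: power_divide)
qed


lemma matrix_upd1:
  fixes a b :: "real^3"
  shows "matrix (\<lambda>h. c *\<^sub>R h + (b \<bullet> h) *\<^sub>R a) = c *\<^sub>R mat 1 + (\<chi> i j. a$i * b$j)"
  by (simp add: matrix_def vec_eq_iff mat_def inner_axis mult.commute) (simp add: axis_def)

lemma det3_rank1:
  fixes a b :: "real^3"
  shows "det (c *\<^sub>R mat 1 + (\<chi> i j. a$i * b$j)) = c^3 + c^2 * (a \<bullet> b)"
  by (simp add: det_3 inner_vec_def sum_3 mat_def) algebra

lemma matrix_comp_mat:
  fixes A :: "real^3^3"
  shows "matrix (\<lambda>h. A *v g h) = A ** matrix g"
  by (simp add: matrix_def matrix_matrix_mult_def matrix_vector_mult_def vec_eq_iff)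

lemma dnormL:
  fixes A :: "real^3^3"
  assumes "A *v z \<noteq> 0"
  shows "((\<lambda>z. norm (A *v z)) has_derivative (\<lambda>h. ((A *v z) \<bullet> (A *v h)) / norm (A *v z))) (at z)"
  using has_derivative_compose[OF linear_imp_has_derivative[OF matrix_vector_mul_linear[of A]] dnorm[OF assms]]
  by (simp add: o_def)

lemma diag_sym: "(diag3 t *v (diag3 t *v z)) \<bullet> h = (diag3 t *v z) \<bullet> (diag3 t *v h)"
  by (simp add: diag3_mulv inner_vec_def sum_3 algebra_simps)

lemma diag_inner_inv:
  assumes "\<And>i. t$i \<noteq> 0"
  shows "(diag3 t *v z) \<bullet> (matrix_inv (diag3 t) *v e) = z \<bullet> e"
  using assms[of 1] assms[of 2] assms[of 3] assms by (simp add: matrix_inv_diag3 diag3_mulv inner_vec_def sum_3 field_simps)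

lemma diag_nz: "(\<And>i. t$i \<noteq> 0) \<Longrightarrow> z \<noteq> 0 \<Longrightarrow> diag3 t *v z \<noteq> 0"
  by (simp add: diag3_mulv vec_eq_iff)

lemma psi_deriv:
  fixes z :: "real^3"
  assumes t: "\<And>i. t$i \<noteq> 0" and z: "z \<noteq> 0"
  defines "L \<equiv> diag3 t"
  shows "((\<lambda>z. (norm z / norm (L *v z)) *\<^sub>R (L *v z)) has_derivative
     (\<lambda>h. L *v ((norm z / norm (L *v z)) *\<^sub>R h +
         ((z /\<^sub>R (norm z * norm (L *v z)) - (norm z / norm (L *v z) ^ 3) *\<^sub>R (L *v (L *v z))) \<bullet> h) *\<^sub>R z))) (at z)"
proof -
  have Lz: "L *v z \<noteq> 0" unfolding L_def using diag_nz[OF t z] .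
  have nLz: "norm (L *v z) \<noteq> 0" using Lz by simp
  show ?thesis
    apply (rule has_derivative_eq_rhs)
     apply (rule derivative_eq_intros dnorm dnormL linear_imp_has_derivative[OF matrix_vector_mul_linear[of L]] z Lz
         | simp add: nLz)+
    apply (rule ext)
    using z nLz unfolding L_def
    apply (simp add: algebra_simps inner_diff_left diag_sym field_simps power3_eq_cube)
    done
qed


lemma psi_part:
  fixes t e :: "real^3"
  assumes t: "\<And>i. t$i \<noteq> 0" and e: "norm e = 1"
  shows "integral (ball 0 1) (\<lambda>x. (indicator {x. x \<noteq> 0 \<and> 0 \<le> x \<bullet> (matrix_inv (diag3 t) *v e)} x
            * inverse ((Qf t (x /\<^sub>R norm x))^2)) *\<^sub>R (x /\<^sub>R norm x))
        = (\<bar>t$1 * t$2 * t$3\<bar> * pi / 3) *\<^sub>R (diag3 t *v e)"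
proof -
  define L where "L = diag3 t"
  define a where "a = matrix_inv (diag3 t) *v e"
  define f where "f = (\<lambda>x::real^3. (indicator {x. x \<noteq> 0 \<and> 0 \<le> x \<bullet> a} x
            * inverse ((Qf t (x /\<^sub>R norm x))^2)) *\<^sub>R (x /\<^sub>R norm x))"
  define D where "D = \<bar>t$1 * t$2 * t$3\<bar>"
  define psi where "psi = (\<lambda>z::real^3. (norm z / norm (L *v z)) *\<^sub>R (L *v z))"
  define psi' where "psi' = (\<lambda>z h. L *v ((norm z / norm (L *v z)) *\<^sub>R h +
         ((z /\<^sub>R (norm z * norm (L *v z)) - (norm z / norm (L *v z) ^ 3) *\<^sub>R (L *v (L *v z))) \<bullet> h) *\<^sub>R z))"
  define S where "S = ball (0::real^3) 1 - {0}"
  have Lnz: "L *v z \<noteq> 0" if "z \<noteq> 0" for z unfolding L_def using diag_nz[OF t that] .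
  have npsi: "norm (psi z) = norm z" for z
    by (cases "z = 0") (auto simp: psi_def Lnz)
  have Sleb: "S \<in> sets lebesgue"
  proof (intro fmeasurableD lmeasurable_open)
    show "bounded S" unfolding S_def by (rule bounded_subset[OF bounded_ball]) auto
    show "open S" unfolding S_def by (intro open_delete open_ball)
  qed
  have der: "(psi has_derivative psi' z) (at z within S)" if "z \<in> S" for z
  proof -
    have "z \<noteq> 0" using that by (simp add: S_def)
    from psi_deriv[OF t this] show ?thesis unfolding psi_def psi'_def L_def by (rule has_derivative_at_withinI)
  qed
  have inj: "inj_on psi S"
  proof (rule inj_onI)
    fix x y assume xS: "x \<in> S" and yS: "y \<in> S" and eq: "psi x = psi y"
    have x0: "x \<noteq> 0" and y0: "y \<noteq> 0" using xS yS by (auto simp: S_def)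
    have r: "norm x = norm y" using npsi[of x] npsi[of y] eq by simp
    have q: "norm (L *v x) > 0" "norm (L *v y) > 0" using Lnz x0 y0 by auto
    define c where "c = norm (L *v x) / norm (L *v y)"
    have e1: "(norm y / norm (L *v x)) *\<^sub>R (L *v x) = (norm y / norm (L *v y)) *\<^sub>R (L *v y)"
      using eq r unfolding psi_def by simp
    have ny: "norm y > 0" using y0 by simp
    have "(norm (L *v x) / norm y) *\<^sub>R ((norm y / norm (L *v x)) *\<^sub>R (L *v x)) =
        (norm (L *v x) / norm y) *\<^sub>R ((norm y / norm (L *v y)) *\<^sub>R (L *v y))"
      using e1 by simp
    then have "L *v x = c *\<^sub>R (L *v y)" using q ny unfolding c_def by simp
    then have "x = c *\<^sub>R y" unfolding L_def using t
      by (simp add: diag3_mulv vec_eq_iff)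
    moreover have "c > 0" using q by (simp add: c_def)
    ultimately have "c = 1" using r y0 by simp
    then show "x = y" using \<open>x = c *\<^sub>R y\<close> by simp
  qed
  have img: "psi ` S = S"
  proof
    show "psi ` S \<subseteq> S" using npsi by (auto simp: S_def psi_def Lnz)
    show "S \<subseteq> psi ` S"
    proof
      fix y assume yS: "y \<in> S"
      have y0: "y \<noteq> 0" using yS by (auto simp: S_def)
      define u where "u = (\<chi> i. y$i / t$i)"
      have Lu: "L *v u = y" unfolding L_def u_def using t by (simp add: diag3_mulv vec_eq_iff)
      have u0: "u \<noteq> 0" using Lu y0 by auto
      define z where "z = (norm y / norm u) *\<^sub>R u"
      have Lz: "L *v z = (norm y / norm u) *\<^sub>R y" unfolding z_def using Lu by (simp add: matrix_vector_mult_scaleR)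
      have nz: "norm z = norm y" unfolding z_def using u0 by simp
      have "psi z = y" unfolding psi_def Lz nz using u0 y0 by (simp add: field_simps)
      moreover have "z \<in> S" using nz yS u0 y0 by (auto simp: S_def z_def)
      ultimately show "y \<in> psi ` S" by blast
    qed
  qed
  have det: "\<bar>det (matrix (psi' z))\<bar> = D * (norm z / norm (L *v z))^3" if "z \<in> S" for z
  proof -
    have z0: "z \<noteq> 0" using that by (auto simp: S_def)
    define s where "s = norm z / norm (L *v z)"
    define w where "w = z /\<^sub>R (norm z * norm (L *v z)) - (norm z / norm (L *v z) ^ 3) *\<^sub>R (L *v (L *v z))"
    have zw: "z \<bullet> w = 0"
    proof -
      have "z \<bullet> (L *v (L *v z)) = (L *v z) \<bullet> (L *v z)"
        unfolding L_def using diag_sym[of t z z] by (simp add: inner_commute)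
      then show ?thesis unfolding w_def using z0 Lnz[OF z0]
        by (simp add: inner_diff_right dot_square_norm field_simps power2_eq_square power3_eq_cube)
    qed
    have "matrix (psi' z) = L ** (s *\<^sub>R mat 1 + (\<chi> i j. z$i * w$j))"
      unfolding psi'_def s_def[symmetric] w_def[symmetric] matrix_comp_mat matrix_upd1 ..
    then have "det (matrix (psi' z)) = (t$1 * t$2 * t$3) * s^3"
      by (simp add: det_mul det3_rank1 zw L_def det_diag3)
    then show ?thesis unfolding D_def s_def by (simp add: abs_mult)
  qed
  have pt: "\<bar>det (matrix (psi' z))\<bar> *\<^sub>R f (psi z) = D *\<^sub>R (L *v phi e z)" if "z \<in> S" for z
  proof -
    have z0: "z \<noteq> 0" using that by (auto simp: S_def)
    define r where "r = norm z"
    define q where "q = norm (L *v z)"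
    have r0: "r > 0" and q0: "q > 0" using z0 Lnz[OF z0] by (auto simp: r_def q_def)
    have ps: "psi z = (r / q) *\<^sub>R (L *v z)" by (simp add: psi_def r_def q_def)
    have ps0: "psi z \<noteq> 0" using npsi[of z] z0 by auto
    have nps: "psi z /\<^sub>R norm (psi z) = (L *v z) /\<^sub>R q"
      using r0 q0 unfolding npsi ps by (simp add: r_def[symmetric] q_def[symmetric] field_simps)
    have ind: "(0 \<le> psi z \<bullet> a) \<longleftrightarrow> (0 \<le> z \<bullet> e)"
      using r0 q0 unfolding ps a_def L_def
      by (simp add: diag_inner_inv[OF t] zero_le_mult_iff zero_le_divide_iff)
    have Q: "Qf t ((L *v z) /\<^sub>R q) = r^2 / q^2"
      unfolding L_def using Qf_scale[where c="inverse q" and t=t and n="diag3 t *v z"] Qf_diag[OF t, of z]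
      by (simp add: r_def dot_square_norm power_inverse divide_inverse_commute)
    have "\<bar>det (matrix (psi' z))\<bar> *\<^sub>R f (psi z) =
        (D * (r/q)^3 * (indicator {x. 0 \<le> x \<bullet> e} z * inverse ((r^2/q^2)^2) / q)) *\<^sub>R (L *v z)"
      unfolding det[OF that] f_def nps Q using ps0 ind
      by (simp add: r_def[symmetric] q_def[symmetric] indicator_def divide_inverse)
    also have "\<dots> = (D * (indicator {x. 0 \<le> x \<bullet> e} z / r)) *\<^sub>R (L *v z)"
      using r0 q0 by (simp add: field_simps power2_eq_square power3_eq_cube)
    also have "\<dots> = D *\<^sub>R (L *v phi e z)"
      unfolding phi_def by (simp add: matrix_vector_mult_scaleR r_def divide_inverse_commute)
    finally show ?thesis .
  qed
  have hlin: "bounded_linear (\<lambda>v. D *\<^sub>R (L *v v))"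
    using matrix_vector_mul_linear[of L] unfolding linear_conv_bounded_linear
    by (intro bounded_linear_compose[OF bounded_linear_scaleR_right]) 
  have phiS: "phi e absolutely_integrable_on S"
    using set_integrable_subset[OF phi_absint Sleb] by (auto simp: S_def)
  have hS: "(\<lambda>z. D *\<^sub>R (L *v phi e z)) absolutely_integrable_on S"
    using absolutely_integrable_linear[OF phiS hlin] by (simp add: o_def)
  have negS: "negligible (ball 0 1 - S)" unfolding S_def
    by (rule negligible_subset[of "{0}"]) auto
  have intphiS: "integral S (phi e) = (pi / 3) *\<^sub>R e"
    using integral_subset_negligible[of S "ball 0 1" "phi e"] negS V_calc[OF e] by (auto simp: S_def)
  have inthS: "integral S (\<lambda>z. D *\<^sub>R (L *v phi e z)) = (D * pi / 3) *\<^sub>R (L *v e)"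
  proof -
    have "integral S ((\<lambda>v. D *\<^sub>R (L *v v)) \<circ> phi e) = D *\<^sub>R (L *v integral S (phi e))"
      by (rule integral_linear[OF set_lebesgue_integral_eq_integral(1)[OF phiS] hlin])
    then show ?thesis using intphiS by (simp add: o_def matrix_vector_mult_scaleR)
  qed
  have lhs: "(\<lambda>z. \<bar>det (matrix (psi' z))\<bar> *\<^sub>R f (psi z)) absolutely_integrable_on S \<and>
      integral S (\<lambda>z. \<bar>det (matrix (psi' z))\<bar> *\<^sub>R f (psi z)) = (D * pi / 3) *\<^sub>R (L *v e)"
  proof
    show "(\<lambda>z. \<bar>det (matrix (psi' z))\<bar> *\<^sub>R f (psi z)) absolutely_integrable_on S"
      using hS set_integrable_cong[of lebesgue lebesgue S S "\<lambda>z. \<bar>det (matrix (psi' z))\<bar> *\<^sub>R f (psi z)"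
          "\<lambda>z. D *\<^sub>R (L *v phi e z)"] pt by auto
    show "integral S (\<lambda>z. \<bar>det (matrix (psi' z))\<bar> *\<^sub>R f (psi z)) = (D * pi / 3) *\<^sub>R (L *v e)"
      using Henstock_Kurzweil_Integration.integral_cong[of S "\<lambda>z. \<bar>det (matrix (psi' z))\<bar> *\<^sub>R f (psi z)"
          "\<lambda>z. D *\<^sub>R (L *v phi e z)"] pt inthS by auto
  qed
  have "integral (psi ` S) f = (D * pi / 3) *\<^sub>R (L *v e)"
    using has_absolute_integral_change_of_variables[OF Sleb der inj, of f] lhs by blast
  then have "integral S f = (D * pi / 3) *\<^sub>R (L *v e)" using img by simp
  moreover have "integral S f = integral (ball 0 1) f"
    by (rule integral_subset_negligible) (use negS in \<open>auto simp: S_def\<close>)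
  ultimately show ?thesis unfolding f_def a_def D_def L_def by simp
qed


lemma borel_measurable_vec_nth3[measurable (raw)]:
  fixes f :: "'a \<Rightarrow> real^3"
  assumes "f \<in> borel_measurable M"
  shows "(\<lambda>x. f x $ i) \<in> borel_measurable M"
  by (rule borel_measurable_continuous_on[OF continuous_on_component[OF continuous_on_id] assms])

lemma Sa_borel[measurable]: "{x::real^3. x \<noteq> 0 \<and> 0 \<le> x \<bullet> a} \<in> sets borel"
proof -
  have "{x::real^3. x \<noteq> 0 \<and> 0 \<le> x \<bullet> a} = {x. 0 \<le> x \<bullet> a} - {0}" by auto
  moreover have "closed {x::real^3. 0 \<le> x \<bullet> a}" by (intro closed_Collect_le continuous_intros)
  ultimately show ?thesis by (simp add: borel_closed sets.Diff)
qed

lemma measF: "(\<lambda>x::real^3. indicator {x. x \<noteq> 0 \<and> 0 \<le> x \<bullet> a} x * (N * inverse ((Qf t (x /\<^sub>R norm x))^2))) \<in> borel_measurable lborel"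
  unfolding Qf_def by measurable

lemma measG: "(\<lambda>x::real^3. N * inverse ((Qf t (x /\<^sub>R norm x))^2)) \<in> borel_measurable lborel"
  unfolding Qf_def by measurable

lemma measF': "(\<lambda>x::real^3. indicator {x. x \<noteq> 0 \<and> 0 \<le> x \<bullet> a} (-x) * (N * inverse ((Qf t ((-x) /\<^sub>R norm (-x)))^2))) \<in> borel_measurable lborel"
  unfolding Qf_def by measurable

lemma measf: "(\<lambda>x::real^3. (indicator {x. x \<noteq> 0 \<and> 0 \<le> x \<bullet> a} x * (N * inverse ((Qf t (x /\<^sub>R norm x))^2))) *\<^sub>R (x /\<^sub>R norm x)) \<in> borel_measurable lborel"
  unfolding Qf_def by measurable

lemma lborel_uminus: "distr lborel borel (uminus :: real^3 \<Rightarrow> real^3) = lborel"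
  using lborel_affine[of "-1" "0::real^3"] by (simp add: density_1)

lemma UNIV_22: "(UNIV :: (2\<times>2) set) = {(1,1),(1,2),(2,1),(2,2)}"
  unfolding UNIV_Times_UNIV[symmetric] UNIV_2 by auto

lemma sum_22: "sum f (UNIV :: (2\<times>2) set) = f (1,1) + f (1,2) + f (2,1) + f (2,2)"
  by (simp add: UNIV_22 add.assoc)

lemma forall_22: "(\<forall>p::2\<times>2. P p) \<longleftrightarrow> P (1,1) \<and> P (1,2) \<and> P (2,1) \<and> P(2,2)"
  by (metis UNIV_22 UNIV_I insert_iff empty_iff)

lemma cscale: "(r::real) *\<^sub>R (z::complex) = of_real r * z" by (simp add: scaleR_conv_of_real)

lemma pauli_simps:
  "pauli 1 $ 1 $ 1 = 0" "pauli 1 $ 1 $ 2 = 1" "pauli 1 $ 2 $ 1 = 1" "pauli 1 $ 2 $ 2 = 0"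
  "pauli 2 $ 1 $ 1 = 0" "pauli 2 $ 1 $ 2 = -\<i>" "pauli 2 $ 2 $ 1 = \<i>" "pauli 2 $ 2 $ 2 = 0"
  "pauli 3 $ 1 $ 1 = 1" "pauli 3 $ 1 $ 2 = 0" "pauli 3 $ 2 $ 1 = 0" "pauli 3 $ 2 $ 2 = -1"
  by (simp_all add: pauli_def)

lemma dot_sigma_simps:
  "dot_sigma n $ 1 $ 1 = complex_of_real (n$3)"
  "dot_sigma n $ 1 $ 2 = complex_of_real (n$1) - \<i> * complex_of_real (n$2)"
  "dot_sigma n $ 2 $ 1 = complex_of_real (n$1) + \<i> * complex_of_real (n$2)"
  "dot_sigma n $ 2 $ 2 = - complex_of_real (n$3)"
  by (simp_all add: dot_sigma_def sum_3 pauli_simps cscale)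

lemma ptrace_calc:
  "ptrace_A (T_state t ** kron (projector e) (mat 1)) =
     (1/4::real) *\<^sub>R (mat 1 + dot_sigma (\<chi> j. t$j * e$j))"
  unfolding vec_eq_iff forall_2
  apply (simp add: ptrace_A_def T_state_def kron_def projector_def matrix_matrix_mult_def sum_22 sum_2
      sum_3 pauli_simps dot_sigma_simps mat_def cscale)
  by (simp add: field_simps)

lemma mtrace_calc:
  "mtrace (T_state t ** kron (projector e) (mat 1)) = 1/2"
  apply (simp add: mtrace_def T_state_def kron_def projector_def matrix_matrix_mult_def sum_22 sum_2
      sum_3 pauli_simps dot_sigma_simps mat_def cscale)
  by (simp add: field_simps)

lemma dot_sigma_lin: "linear dot_sigma"
  by (rule linearI) (simp_all add: dot_sigma_def scaleR_add_left sum.distrib scaleR_sum_right)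

lemma dot_sigma_blin: "bounded_linear dot_sigma"
  using dot_sigma_lin by (simp add: linear_conv_bounded_linear)

lemma ds_scale: "dot_sigma (c *\<^sub>R v) = c *\<^sub>R dot_sigma v"
  by (rule linear_cmul[OF dot_sigma_lin])

lemma sphere_int_split:
  fixes h :: "real^3 \<Rightarrow> real"
  assumes i1: "set_integrable lborel (ball 0 1) (\<lambda>x. h (x /\<^sub>R norm x))"
    and i2: "set_integrable lborel (ball 0 1) (\<lambda>x. h (x /\<^sub>R norm x) *\<^sub>R (x /\<^sub>R norm x))"
  shows "sphere_integral (\<lambda>n. h n *\<^sub>R ((1/2::real) *\<^sub>R (mat 1 + dot_sigma n))) =
     (1/2::real) *\<^sub>R (sphere_integral h *\<^sub>R (mat 1 :: cmat2) + dot_sigma (sphere_integral (\<lambda>n. h n *\<^sub>R n)))"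
proof -
  let ?B = "ball (0::real^3) 1"
  let ?u = "\<lambda>x::real^3. indicator ?B x *\<^sub>R h (x /\<^sub>R norm x)"
  let ?v = "\<lambda>x::real^3. indicator ?B x *\<^sub>R (h (x /\<^sub>R norm x) *\<^sub>R (x /\<^sub>R norm x))"
  have iu: "integrable lborel ?u" using i1 unfolding set_integrable_def .
  have iv: "integrable lborel ?v" using i2 unfolding set_integrable_def .
  have eq: "(\<lambda>x. indicator ?B x *\<^sub>R (h (x /\<^sub>R norm x) *\<^sub>R ((1/2::real) *\<^sub>R (mat 1 + dot_sigma (x /\<^sub>R norm x))))) =
      (\<lambda>x. (1/2::real) *\<^sub>R (?u x *\<^sub>R (mat 1::cmat2) + dot_sigma (?v x)))"
    by (simp add: fun_eq_iff ds_scale scaleR_add_right)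
  have "integral\<^sup>L lborel (\<lambda>x. (1/2::real) *\<^sub>R (?u x *\<^sub>R (mat 1::cmat2) + dot_sigma (?v x))) =
      (1/2::real) *\<^sub>R (integral\<^sup>L lborel ?u *\<^sub>R (mat 1::cmat2) + dot_sigma (integral\<^sup>L lborel ?v))"
    using iu iv integrable_bounded_linear[OF dot_sigma_blin iv]
    by (simp add: integral_bounded_linear[OF dot_sigma_blin])
  then show ?thesis
    unfolding sphere_integral_def set_lebesgue_integral_def eq
    by (simp add: ds_scale scaleR_add_right)
qed

theorem mainTheorem3:
  fixes t :: "real^3"
  defines "T \<equiv> diag3 t"
  assumes nonzero: "t $ 1 * t $ 2 * t $ 3 \<noteq> 0"
    and valid: "density_operator (T_state t)"
    and norm_cond: "2 * pi * N_T T * \<bar>det T\<bar> = 1"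
  shows "\<forall>e. norm e = 1 \<longrightarrow>
      sphere_integral (\<lambda>n. indicator (region T e) n * LHS_density T n) = 1/2
    \<and> sphere_integral (\<lambda>n. (indicator (region T e) n * LHS_density T n) *\<^sub>R n) = (1/2) *\<^sub>R (T *v e)
    \<and> ptrace_A (T_state t ** kron (projector e) (mat 1))
        = sphere_integral (\<lambda>n. (LHS_density T n * response T e n) *\<^sub>R
                                 ((1/2 :: real) *\<^sub>R (mat 1 + dot_sigma n)))
    \<and> mtrace (T_state t ** kron (projector e) (mat 1))
        = complex_of_real (sphere_integral (\<lambda>n. LHS_density T n * response T e n))"
proof (intro allI impI)
  fix e :: "real^3" assume e: "norm e = 1"
  have t: "t$i \<noteq> 0" for i using nonzero exhaust_3[of i] by auto
  define N where "N = N_T T"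
  define a where "a = matrix_inv T *v e"
  define Sa where "Sa = {x::real^3. x \<noteq> 0 \<and> 0 \<le> x \<bullet> a}"
  define B where "B = ball (0::real^3) 1"
  define F where "F = (\<lambda>x::real^3. indicator Sa x * (N * inverse ((Qf t (x /\<^sub>R norm x))^2)))"
  define G where "G = (\<lambda>x::real^3. N * inverse ((Qf t (x /\<^sub>R norm x))^2))"
  define C where "C = \<bar>N\<bar> * ((t$1)^2 + (t$2)^2 + (t$3)^2)^2"
  have Qeq: "n \<bullet> ((matrix_inv T ** matrix_inv T) *v n) = Qf t n" for n
    unfolding T_def using Q_eq[of t n] t by blast
  have LD: "LHS_density T n = N * inverse ((Qf t n)^2)" for n
    unfolding LHS_density_def N_def Qeq ..
  have reg: "indicator (region T e) (x /\<^sub>R norm x) = (indicator Sa x :: real)" for x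
  proof (cases "x = 0")
    case True then show ?thesis by (simp add: Sa_def region_def unit_sphere3_def indicator_def)
  next
    case False
    have "x /\<^sub>R norm x \<in> unit_sphere3" using False by (simp add: unit_sphere3_def)
    moreover have "(0 \<le> (x /\<^sub>R norm x) \<bullet> a) \<longleftrightarrow> (0 \<le> x \<bullet> a)" using False
      by (simp add: zero_le_mult_iff)
    ultimately show ?thesis using False by (simp add: Sa_def region_def indicator_def a_def)
  qed
  have FF: "indicator (region T e) (x /\<^sub>R norm x) * LHS_density T (x /\<^sub>R norm x) = F x" for x
    by (simp add: reg LD F_def)
  have resp: "LHS_density T n * response T e n = indicator (region T e) n * LHS_density T n" for n
    by (simp add: response_def indicator_def)
  have bndG: "norm (G x) \<le> C" for x
    unfolding G_def C_def using Qinv_bound[OF t, of x]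
    by (simp add: abs_mult mult_left_mono)
  have C0: "0 \<le> C" unfolding C_def by simp
  have bndF: "norm (F x) \<le> C" for x
    using bndG[of x] C0 unfolding F_def G_def by (simp add: indicator_def abs_mult)
  have bndFn: "norm (F (-x)) \<le> C" for x using bndF .
  have bndf: "norm (F x *\<^sub>R (x /\<^sub>R norm x)) \<le> C" for x
    using bndF[of x] C0 by (cases "x = 0") (auto simp: abs_mult mult.assoc)
  have Bs: "B \<in> sets lborel" unfolding B_def by simp
  have measF: "F \<in> borel_measurable lborel" unfolding F_def Sa_def Qf_def by measurable
  have measG: "G \<in> borel_measurable lborel" unfolding G_def Qf_def by measurable
  have measFn: "(\<lambda>x. F (-x)) \<in> borel_measurable lborel" unfolding F_def Sa_def Qf_def by measurable
  have measf: "(\<lambda>x. F x *\<^sub>R (x /\<^sub>R norm x)) \<in> borel_measurable lborel" unfolding F_def Sa_def Qf_def by measurable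
  have intF: "set_integrable lborel B F" by (rule bdd_setint[OF measF bndF Bs]) (simp add: B_def)
  have intG: "set_integrable lborel B G" by (rule bdd_setint[OF measG bndG Bs]) (simp add: B_def)
  have intFn: "set_integrable lborel B (\<lambda>x. F (-x))" by (rule bdd_setint[OF measFn bndFn Bs]) (simp add: B_def)
  have intf: "set_integrable lborel B (\<lambda>x. F x *\<^sub>R (x /\<^sub>R norm x))" by (rule bdd_setint[OF measf bndf Bs]) (simp add: B_def)
  have a0: "a \<noteq> 0"
  proof
    assume "a = 0"
    then have "diag3 t *v a = 0" by simp
    moreover have "diag3 t *v a = e" unfolding a_def T_def using t
      by (simp add: matrix_inv_diag3 diag3_mulv vec_eq_iff)
    ultimately show False using e by simp
  qed
  have hyp_null: "{x::real^3. a \<bullet> x = 0} \<in> null_sets lborel"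
  proof -
    have "{x::real^3. a \<bullet> x = 0} \<in> null_sets lebesgue"
      using negligible_hyperplane[of a 0] a0 negligible_iff_null_sets by blast
    moreover have "{x::real^3. a \<bullet> x = 0} \<in> sets lborel"
      by (simp add: borel_closed closed_hyperplane)
    ultimately show ?thesis using null_sets_completion_iff by blast
  qed
  have refl: "(LINT x:B|lborel. F x) = (LINT x:B|lborel. F (-x))"
  proof -
    have mi: "(\<lambda>x. indicator B x *\<^sub>R F x) \<in> borel_measurable borel"
      using measF Bs by simp
    have "(LINT x:B|lborel. F x) = integral\<^sup>L (distr lborel borel uminus) (\<lambda>x. indicator B x *\<^sub>R F x)"
      unfolding set_lebesgue_integral_def lborel_uminus ..
    also have "\<dots> = integral\<^sup>L lborel (\<lambda>x. indicator B (-x) *\<^sub>R F (-x))"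
      by (rule integral_distr[OF _ mi]) simp
    also have "\<dots> = (LINT x:B|lborel. F (-x))"
      unfolding set_lebesgue_integral_def B_def by (simp add: indicator_def)
    finally show ?thesis .
  qed
  have sumF: "F x + F (-x) = G x" if "x \<notin> {x. a \<bullet> x = 0}" for x
  proof -
    have x0: "x \<noteq> 0" using that by auto
    have Gm: "inverse ((Qf t ((-x) /\<^sub>R norm (-x)))^2) = inverse ((Qf t (x /\<^sub>R norm x))^2)"
      using Qf_neg[of t "x /\<^sub>R norm x"] by simp
    have "indicator Sa x + indicator Sa (-x) = (1::real)"
      using that x0 by (auto simp: Sa_def indicator_def inner_commute)
    then show ?thesis unfolding F_def G_def Gm by (metis distrib_right mult_1)
  qed
  have FG: "(LINT x:B|lborel. F x) + (LINT x:B|lborel. F x) = (LINT x:B|lborel. G x)"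
  proof -
    have "(LINT x:B|lborel. F x) + (LINT x:B|lborel. F x) = (LINT x:B|lborel. F x) + (LINT x:B|lborel. F (-x))"
      using refl by simp
    also have "\<dots> = integral\<^sup>L lborel (\<lambda>x. indicator B x *\<^sub>R (F x + F (-x)))"
      using intF intFn unfolding set_lebesgue_integral_def set_integrable_def
      by (simp add: distrib_left)
    also have "\<dots> = (LINT x:B|lborel. G x)"
      unfolding set_lebesgue_integral_def
    proof (rule integral_cong_AE)
      show "AE x in lborel. indicator B x *\<^sub>R (F x + F (- x)) = indicator B x *\<^sub>R G x"
        using AE_not_in[OF hyp_null] by eventually_elim (simp add: sumF)
    qed (use measF measFn measG Bs in simp_all)
    finally show ?thesis .
  qed
  define J where "J = (LINT x:B|lborel. inverse ((Qf t (x /\<^sub>R norm x))^2))"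
  have NJ: "N = inverse (3 * J)"
    unfolding N_def N_T_def sphere_integral_def J_def B_def Qeq by simp
  have N0: "N \<noteq> 0" using norm_cond unfolding N_def[symmetric] by auto
  have GJ: "(LINT x:B|lborel. G x) = N * J"
    unfolding G_def J_def set_lebesgue_integral_def by (simp add: mult.left_commute)
  have G1: "3 * (LINT x:B|lborel. G x) = 1"
    using N0 unfolding GJ NJ by (auto simp: field_simps)
  have part1: "sphere_integral (\<lambda>n. indicator (region T e) n * LHS_density T n) = 1/2"
    unfolding sphere_integral_def FF B_def[symmetric] using FG G1 by simp
  have detT: "det T = t$1 * t$2 * t$3" unfolding T_def by (rule det_diag3)
  have pp: "integral B (\<lambda>x. (indicator Sa x * inverse ((Qf t (x /\<^sub>R norm x))^2)) *\<^sub>R (x /\<^sub>R norm x))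
      = (\<bar>t$1 * t$2 * t$3\<bar> * pi / 3) *\<^sub>R (T *v e)"
    using psi_part[OF t e] unfolding B_def Sa_def a_def T_def .
  have "(LINT x:B|lborel. F x *\<^sub>R (x /\<^sub>R norm x)) = integral B (\<lambda>x. F x *\<^sub>R (x /\<^sub>R norm x))"
    by (rule set_borel_integral_eq_integral(2)[OF intf])
  also have "\<dots> = integral B (\<lambda>x. N *\<^sub>R ((indicator Sa x * inverse ((Qf t (x /\<^sub>R norm x))^2)) *\<^sub>R (x /\<^sub>R norm x)))"
    unfolding F_def by (simp add: algebra_simps)
  also have "\<dots> = (N * \<bar>t$1 * t$2 * t$3\<bar> * pi / 3) *\<^sub>R (T *v e)"
    unfolding integral_cmul pp by simp
  finally have vecB: "(LINT x:B|lborel. F x *\<^sub>R (x /\<^sub>R norm x)) = (N * \<bar>t$1 * t$2 * t$3\<bar> * pi / 3) *\<^sub>R (T *v e)" .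
  have cst: "N * \<bar>t$1 * t$2 * t$3\<bar> * pi = 1/2"
    using norm_cond unfolding N_def[symmetric] detT by (simp add: field_simps)
  have part2: "sphere_integral (\<lambda>n. (indicator (region T e) n * LHS_density T n) *\<^sub>R n) = (1/2) *\<^sub>R (T *v e)"
    unfolding sphere_integral_def FF B_def[symmetric] vecB using cst by simp
  have i1: "set_integrable lborel (ball 0 1) (\<lambda>x. indicator (region T e) (x /\<^sub>R norm x) * LHS_density T (x /\<^sub>R norm x))"
    using intF unfolding FF B_def .
  have i2: "set_integrable lborel (ball 0 1) (\<lambda>x. (indicator (region T e) (x /\<^sub>R norm x) * LHS_density T (x /\<^sub>R norm x)) *\<^sub>R (x /\<^sub>R norm x))"
    using intf unfolding FF B_def .
  have part3: "ptrace_A (T_state t ** kron (projector e) (mat 1))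
        = sphere_integral (\<lambda>n. (LHS_density T n * response T e n) *\<^sub>R
                                 ((1/2 :: real) *\<^sub>R (mat 1 + dot_sigma n)))"
    unfolding resp sphere_int_split[OF i1 i2] part1 part2 ptrace_calc
    by (simp add: ds_scale T_def diag3_mulv scaleR_add_right)
  have part4: "mtrace (T_state t ** kron (projector e) (mat 1))
        = complex_of_real (sphere_integral (\<lambda>n. LHS_density T n * response T e n))"
    unfolding resp part1 mtrace_calc by simp
  show "sphere_integral (\<lambda>n. indicator (region T e) n * LHS_density T n) = 1/2
    \<and> sphere_integral (\<lambda>n. (indicator (region T e) n * LHS_density T n) *\<^sub>R n) = (1/2) *\<^sub>R (T *v e)
    \<and> ptrace_A (T_state t ** kron (projector e) (mat 1))
        = sphere_integral (\<lambda>n. (LHS_density T n * response T e n) *\<^sub>R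
                                 ((1/2 :: real) *\<^sub>R (mat 1 + dot_sigma n)))
    \<and> mtrace (T_state t ** kron (projector e) (mat 1))
        = complex_of_real (sphere_integral (\<lambda>n. LHS_density T n * response T e n))"
    using part1 part2 part3 part4 by blast
qed


end
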